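(* Let $p,q$ be distinct propositional variables. The formula $\Box(p\vee q)\to((\neg\Box\neg p\to\Box q)\to\Box q)$ is derivable in $\mathsf{CK}\oplus\mathsf{N}_\Diamond\oplus\mathsf{wCD}$ but not in $\mathsf{CK}$.
   Context: Formulas: $\mathbf{L}$ is generated from a countably infinite set of propositional variables by $\varphi ::= p \mid \bot \mid \varphi\wedge\varphi \mid \varphi\vee\varphi \mid \varphi\to\varphi \mid \Box\varphi \mid \Diamond\varphi$; $\neg\varphi:=\varphi\to\bot$. Axioms: $\mathsf{K}_\Box$: $\Box(\varphi\to\psi)\to(\Box\varphi\to\Box\psi)$; $\mathsf{K}_\Diamond$: $\Box(\varphi\to\psi)\to(\Diamond\varphi\to\Diamond\psi)$; $\mathsf{N}_\Diamond$: $\Diamond\bot\to\bot$; $\mathsf{wCD}$: $\Box(\varphi\vee\psi)\to((\Diamond\varphi\to\Box\psi)\to\Box\psi)$. For a set $\mathsf{Ax}$ of axioms, $\mathsf{CK}\oplus\mathsf{Ax}$ is the relation $\Gamma\vdash_{\mathsf{Ax}}\varphi$ inductively generated by: (Ax) $\Gamma\vdash\varphi$ whenever $\varphi$ is a substitution instance of an axiom of a standard Hilbert axiomatisation of intuitionistic propositional logic, of $\mathsf{K}_\Box$, of $\mathsf{K}_\Diamond$, or of an element of $\mathsf{Ax}$; (El) $\Gamma\vdash\varphi$ if $\varphi\in\Gamma$; (MP) from $\Gamma\vdash\varphi$ and $\Gamma\vdash\varphi\to\psi$ infer $\Gamma\vdash\psi$; (Nec) from $\emptyset\vdash\varphi$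 infer $\Gamma\vdash\Box\varphi$. $\mathsf{CK}$ is the case $\mathsf{Ax}=\emptyset$. A formula is derivable in a logic if $\emptyset\vdash_{\mathsf{Ax}}\varphi$. *)

theory Defs
  imports Main
begin

datatype fm =
    Var nat
  | Bot
  | Conj fm fm
  | Disj fm fm
  | Imp fm fm
  | Box fm
  | Dia fm

definition Neg :: "fm \<Rightarrow> fm" where
  "Neg \<phi> = Imp \<phi> Bot"

primrec subst :: "(nat \<Rightarrow> fm) \<Rightarrow> fm \<Rightarrow> fm" where
  "subst \<sigma> (Var n) = \<sigma> n"
| "subst \<sigma> Bot = Bot"
| "subst \<sigma> (Conj a b) = Conj (subst \<sigma> a) (subst \<sigma> b)"
| "subst \<sigma> (Disj a b) = Disj (subst \<sigma> a) (subst \<sigma> b)"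
| "subst \<sigma> (Imp a b) = Imp (subst \<sigma> a) (subst \<sigma> b)"
| "subst \<sigma> (Box a) = Box (subst \<sigma> a)"
| "subst \<sigma> (Dia a) = Dia (subst \<sigma> a)"

abbreviation "P0 \<equiv> Var 0"
abbreviation "P1 \<equiv> Var 1"
abbreviation "P2 \<equiv> Var 2"

definition IPC_axioms :: "fm set" where
  "IPC_axioms = {
     Imp P0 (Imp P1 P0),
     Imp (Imp P0 (Imp P1 P2)) (Imp (Imp P0 P1) (Imp P0 P2)),
     Imp (Conj P0 P1) P0,
     Imp (Conj P0 P1) P1,
     Imp P0 (Imp P1 (Conj P0 P1)),
     Imp P0 (Disj P0 P1),
     Imp P1 (Disj P0 P1),
     Imp (Imp P0 P2) (Imp (Imp P1 P2) (Imp (Disj P0 P1) P2)),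
     Imp Bot P0 }"

definition K_Box :: fm where
  "K_Box = Imp (Box (Imp P0 P1)) (Imp (Box P0) (Box P1))"

definition K_Dia :: fm where
  "K_Dia = Imp (Box (Imp P0 P1)) (Imp (Dia P0) (Dia P1))"

definition N_Dia :: fm where
  "N_Dia = Imp (Dia Bot) Bot"

definition wCD :: fm where
  "wCD = Imp (Box (Disj P0 P1)) (Imp (Imp (Dia P0) (Box P1)) (Box P1))"

inductive derives :: "fm set \<Rightarrow> fm set \<Rightarrow> fm \<Rightarrow> bool" for Ax :: "fm set" where
  ax: "\<chi> \<in> IPC_axioms \<union> {K_Box, K_Dia} \<union> Ax \<Longrightarrow> derives Ax \<Gamma> (subst \<sigma> \<chi>)"
| el: "\<phi> \<in> \<Gamma> \<Longrightarrow> derives Ax \<Gamma> \<phi>"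
| mp: "derives Ax \<Gamma> \<phi> \<Longrightarrow> derives Ax \<Gamma> (Imp \<phi> \<psi>) \<Longrightarrow> derives Ax \<Gamma> \<psi>"
| nec: "derives Ax {} \<phi> \<Longrightarrow> derives Ax \<Gamma> (Box \<phi>)"

definition derivable :: "fm set \<Rightarrow> fm \<Rightarrow> bool" where
  "derivable Ax \<phi> = derives Ax {} \<phi>"

end

theory Submission
  imports Defs
begin

definition s3 :: "fm \<Rightarrow> fm \<Rightarrow> fm \<Rightarrow> nat \<Rightarrow> fm" where
  "s3 a b c = (\<lambda>n. if n = 0 then a else if n = 1 then b else c)"

lemma axK: "derives Ax \<Gamma> (Imp a (Imp b a))"
proof -
  have "derives Ax \<Gamma> (subst (s3 a b Bot) (Imp P0 (Imp P1 P0)))"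
    by (rule ax) (simp add: IPC_axioms_def)
  then show ?thesis by (simp add: s3_def)
qed

lemma axS: "derives Ax \<Gamma> (Imp (Imp a (Imp b c)) (Imp (Imp a b) (Imp a c)))"
proof -
  have "derives Ax \<Gamma> (subst (s3 a b c) (Imp (Imp P0 (Imp P1 P2)) (Imp (Imp P0 P1) (Imp P0 P2))))"
    by (rule ax) (simp add: IPC_axioms_def)
  then show ?thesis by (simp add: s3_def)
qed

lemma axKDia: "derives Ax \<Gamma> (Imp (Box (Imp a b)) (Imp (Dia a) (Dia b)))"
proof -
  have "derives Ax \<Gamma> (subst (s3 a b Bot) K_Dia)"
    by (rule ax) simp
  then show ?thesis by (simp add: s3_def K_Dia_def)
qed

lemma axN: "N_Dia \<in> Ax \<Longrightarrow> derives Ax \<Gamma> (Imp (Dia Bot) Bot)"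
proof -
  assume "N_Dia \<in> Ax"
  then have "derives Ax \<Gamma> (subst (s3 Bot Bot Bot) N_Dia)"
    by (intro ax) simp
  then show ?thesis by (simp add: s3_def N_Dia_def)
qed

lemma axW: "wCD \<in> Ax \<Longrightarrow> derives Ax \<Gamma> (Imp (Box (Disj a b)) (Imp (Imp (Dia a) (Box b)) (Box b)))"
proof -
  assume "wCD \<in> Ax"
  then have "derives Ax \<Gamma> (subst (s3 a b Bot) wCD)"
    by (intro ax) simp
  then show ?thesis by (simp add: s3_def wCD_def)
qed

lemma axI: "derives Ax \<Gamma> (Imp a a)"
  by (meson axK axS mp)

lemma ded_aux: "derives Ax \<Gamma>' \<phi> \<Longrightarrow> \<Gamma>' = insert A \<Gamma> \<Longrightarrow> derives Ax \<Gamma> (Imp A \<phi>)"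
proof (induction rule: derives.induct)
  case (ax \<chi> \<Gamma>' \<sigma>)
  then show ?case by (meson axK derives.ax mp)
next
  case (el \<phi> \<Gamma>')
  then show ?case by (metis axI axK derives.el insert_iff mp)
next
  case (mp \<Gamma>' \<phi> \<psi>)
  then show ?case by (meson axS derives.mp)
next
  case (nec \<phi> \<Gamma>')
  then show ?case by (meson axK derives.nec derives.mp)
qed

lemma ded: "derives Ax (insert A \<Gamma>) \<phi> \<Longrightarrow> derives Ax \<Gamma> (Imp A \<phi>)"
  using ded_aux by blast

lemma part1:
  "derivable {N_Dia, wCD}
           (Imp (Box (Disj (Var p) (Var q)))
                (Imp (Imp (Neg (Box (Neg (Var p)))) (Box (Var q))) (Box (Var q))))"
proof -
  let ?Ax = "{N_Dia, wCD}"
  let ?B = "Box (Disj (Var p) (Var q))"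
  let ?C = "Imp (Neg (Box (Neg (Var p)))) (Box (Var q))"
  let ?G = "insert ?C (insert ?B {})"
  have 1: "derives ?Ax (insert (Box (Imp (Var p) Bot)) (insert (Dia (Var p)) ?G)) Bot"
  proof -
    let ?H = "insert (Box (Imp (Var p) Bot)) (insert (Dia (Var p)) ?G)"
    have "derives ?Ax ?H (Dia Bot)"
      by (meson axKDia derives.el derives.mp insertI1 insertI2)
    then show ?thesis by (meson axN derives.mp insertI1 insertI2)
  qed
  have "derives ?Ax (insert (Dia (Var p)) ?G) (Neg (Box (Neg (Var p))))"
    using ded[OF 1] by (simp add: Neg_def)
  then have "derives ?Ax (insert (Dia (Var p)) ?G) (Box (Var q))"
    by (meson derives.el derives.mp insertI1 insertI2)
  then have "derives ?Ax ?G (Imp (Dia (Var p)) (Box (Var q)))" by (rule ded)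
  moreover have "derives ?Ax ?G ?B" by (simp add: derives.el)
  ultimately have "derives ?Ax ?G (Box (Var q))"
    by (meson axW derives.mp insertI1 insertI2)
  then show ?thesis unfolding derivable_def by (intro ded)
qed

definition le :: "nat \<Rightarrow> nat \<Rightarrow> bool" where
  "le x y = (x = y \<or> (x = 0 \<and> y = 1))"

definition R :: "nat \<Rightarrow> nat \<Rightarrow> bool" where
  "R x y = (x = 0 \<and> y = 2)"

fun sem :: "(nat \<Rightarrow> nat \<Rightarrow> bool) \<Rightarrow> fm \<Rightarrow> nat \<Rightarrow> bool" where
  "sem V (Var n) x = V n x"
| "sem V Bot x = False"
| "sem V (Conj a b) x = (sem V a x \<and> sem V b x)"
| "sem V (Disj a b) x = (sem V a x \<or> sem V b x)"
| "sem V (Imp a b) x = (\<forall>y. le x y \<longrightarrow> sem V a y \<longrightarrow> sem V b y)"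
| "sem V (Box a) x = (\<forall>y z. le x y \<longrightarrow> R y z \<longrightarrow> sem V a z)"
| "sem V (Dia a) x = True"

definition pers :: "(nat \<Rightarrow> nat \<Rightarrow> bool) \<Rightarrow> bool" where
  "pers V = (\<forall>n x y. V n x \<longrightarrow> le x y \<longrightarrow> V n y)"

definition valid :: "fm \<Rightarrow> bool" where
  "valid \<phi> = (\<forall>V x. pers V \<longrightarrow> sem V \<phi> x)"

lemma le_trans: "le x y \<Longrightarrow> le y z \<Longrightarrow> le x z"
  by (auto simp: le_def)

lemma sem_pers: "pers V \<Longrightarrow> sem V \<phi> x \<Longrightarrow> le x y \<Longrightarrow> sem V \<phi> y"
  by (induction \<phi> arbitrary: x y) (auto simp: pers_def intro: le_trans)

lemma sem_subst: "sem V (subst \<sigma> \<phi>) x = sem (\<lambda>n y. sem V (\<sigma> n) y) \<phi> x"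
  by (induction \<phi> arbitrary: x) auto

lemma pers_sub: "pers V \<Longrightarrow> pers (\<lambda>n y. sem V (\<sigma> n) y)"
  using sem_pers[of V] unfolding pers_def by blast

lemma axioms_valid:
  assumes "\<chi> \<in> IPC_axioms \<union> {K_Box, K_Dia}" "pers V"
  shows "sem V \<chi> x"
  using assms sem_pers[OF assms(2)]
  by (auto simp: IPC_axioms_def K_Box_def K_Dia_def le_def R_def pers_def)

lemma sound: "derives Ax \<Gamma> \<phi> \<Longrightarrow> Ax = {} \<Longrightarrow> \<forall>\<psi>\<in>\<Gamma>. valid \<psi> \<Longrightarrow> valid \<phi>"
proof (induction rule: derives.induct)
  case (ax \<chi> \<Gamma> \<sigma>)
  then show ?case unfolding valid_def sem_subst
    using axioms_valid pers_sub by blast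
next
  case (el \<phi> \<Gamma>)
  then show ?case by blast
next
  case (mp \<Gamma> \<phi> \<psi>)
  then show ?case unfolding valid_def by (auto simp: le_def)
next
  case (nec \<phi> \<Gamma>)
  then show ?case unfolding valid_def by auto
qed

theorem mainTheorem19:
  fixes p q :: nat
  assumes "p \<noteq> q"
  shows "derivable {N_Dia, wCD}
           (Imp (Box (Disj (Var p) (Var q)))
                (Imp (Imp (Neg (Box (Neg (Var p)))) (Box (Var q))) (Box (Var q))))
       \<and> \<not> derivable {}
           (Imp (Box (Disj (Var p) (Var q)))
                (Imp (Imp (Neg (Box (Neg (Var p)))) (Box (Var q))) (Box (Var q))))"
proof
  show "derivable {N_Dia, wCD}
           (Imp (Box (Disj (Var p) (Var q)))
                (Imp (Imp (Neg (Box (Neg (Var p)))) (Box (Var q))) (Box (Var q))))"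
    by (rule part1)
next
  let ?V = "\<lambda>n y. n = p \<and> y = (2::nat)"
  have pv: "pers ?V" by (auto simp: pers_def le_def)
  have "\<not> sem ?V (Imp (Box (Disj (Var p) (Var q)))
                (Imp (Imp (Neg (Box (Neg (Var p)))) (Box (Var q))) (Box (Var q)))) 0"
    using assms by (auto simp: le_def R_def Neg_def)
  then have "\<not> valid (Imp (Box (Disj (Var p) (Var q)))
                (Imp (Imp (Neg (Box (Neg (Var p)))) (Box (Var q))) (Box (Var q))))"
    using pv unfolding valid_def by blast
  then show "\<not> derivable {}
           (Imp (Box (Disj (Var p) (Var q)))
                (Imp (Imp (Neg (Box (Neg (Var p)))) (Box (Var q))) (Box (Var q))))"
    unfolding derivable_def using sound by blast
qed

end
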